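(* Suppose $\phi_1,\phi_2$ satisfy the Doubrov–Ferapontov modified heavenly hierarchy $(\Phi_1\wedge\Phi_2)_-=0$, and let $u$ be a function with $g_1=u_x$ and $f_1=u_y$ (so that $f_{1,z_j}=u_{yz_j}$, $g_{1,z_j}=u_{xz_j}$). Then the Lax–Sato equations take the Hamiltonian form $$\frac{\partial\vec\phi}{\partial t_n}=\{-\lambda^n y+A_n,\vec\phi\}\ (n\ge1),\qquad \lambda\frac{\partial\vec\phi}{\partial z_j}=\{-\lambda^j x+B_j,\vec\phi\}\ (j\ge2),\qquad \lambda\frac{\partial\vec\phi}{\partial z_1}=\{B_1,\vec\phi\},$$ where $A_n=\sum_{k=1}^{n}\lambda^{n-k}g_k$, $B_j=-\sum_{m=1}^{j}\lambda^{j-m}f_m-u_{z_j}$ for $j\ge2$, and $B_1=-u_{z_1}$.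
   Context: Independent variables are $x,y$ and two infinite families $t_1,t_2,\dots$ and $z_1,z_2,\dots$; write $t:=t_1$, $z:=z_1$. $\lambda$ is a formal spectral parameter; $(\cdot)_+$ and $(\cdot)_-$ denote the parts of a formal Laurent series in $\lambda$ with nonnegative, resp. negative, powers. Consider formal series $\phi_1=-y+\sum_{j\ge2}z_j\lambda^{j-1}+\sum_{k\ge1}g_k\lambda^{-k}$, $\phi_2=x+t_1\lambda+\sum_{n\ge2}t_n\lambda^n+\sum_{m\ge1}f_m\lambda^{-m}$, where $g_k,f_m$ are functions of $(x,y,t_1,t_2,\dots,z_1,z_2,\dots)$, and $\vec\phi=(\phi_1,\phi_2)^T$. Define the 1-forms $\Phi_i=\phi_{i,x}dx+\phi_{i,y}dy+\sum_{n\ge1}\phi_{i,t_n}dt_n+\lambda\sum_{j\ge1}\phi_{i,z_j}dz_j$. The Doubrov–Ferapontov modified heavenly hierarchy is $(\Phi_1\wedge\Phi_2)_-=0$: the negative-power part of the coefficient of every basis 2-form vanishes, the coefficient of $da\wedge db$ being $\lambda^{\epsilon}(\phi_{1,a}\phi_{2,b}-\phi_{1,b}\phi_{2,a})$ with $\epsilon$ the number of $z$-variables among $a,b$. The Poisson bracket is $\{F,G\}=F_xG_y-F_yG_x$, applied componentwise to $\vec\phi$. Subscripts denote partial derivatives. *)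

theory Defs
  imports "HOL-Analysis.Analysis" "HOL-Computational_Algebra.Formal_Laurent_Series"
begin

text \<open>Independent variables: X = x, Y = y, T n = t_n, Z n = z_n (n \<ge> 1).
  The coordinates T 0 and Z 0 are inert dummy coordinates (not among the paper's variables).\<close>
datatype coord = X | Y | T nat | Z nat

fun valid_coord :: "coord \<Rightarrow> bool" where
  "valid_coord (T n) = (n \<ge> 1)"
| "valid_coord (Z n) = (n \<ge> 1)"
| "valid_coord _ = True"

type_synonym point = "coord \<Rightarrow> real"

definition pd :: "coord \<Rightarrow> (point \<Rightarrow> real) \<Rightarrow> point \<Rightarrow> real" where
  "pd a F p = deriv (\<lambda>h. F (p(a := h))) (p a)"

fun ipd :: "coord list \<Rightarrow> (point \<Rightarrow> real) \<Rightarrow> point \<Rightarrow> real" where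
  "ipd [] F = F"
| "ipd (a # as) F = pd a (ipd as F)"

definition smooth_fn :: "(point \<Rightarrow> real) \<Rightarrow> bool" where
  "smooth_fn F \<longleftrightarrow>
     (\<forall>as a p. (\<lambda>h. ipd as F (p(a := h))) differentiable (at (p a))) \<and>
     (\<forall>as a b p. continuous_on UNIV (\<lambda>v::real \<times> real. ipd as F (p(a := fst v, b := snd v))))"

text \<open>Such series are represented as formal Laurent series (type fls) in \<mu> = 1/lambda;
  the coefficient of \<lambda>^k is the coefficient of \<mu>^(-k).\<close>

definition lamb :: "real fls" where "lamb = fls_X_inv"

definition lcoeff :: "real fls \<Rightarrow> int \<Rightarrow> real" where
  "lcoeff F k = fls_nth F (- k)"

text \<open>The series with coefficient c k at \<lambda>^k (meaningful when c is bounded above).\<close>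
definition lser :: "(int \<Rightarrow> real) \<Rightarrow> real fls" where
  "lser c = Abs_fls (\<lambda>n. c (- n))"

definition neg_part_zero :: "real fls \<Rightarrow> bool" where
  "neg_part_zero F \<longleftrightarrow> (\<forall>k < 0. lcoeff F k = 0)"

text \<open>Families of functions indexed by the power of \<lambda> (series with function coefficients).\<close>
type_synonym cfam = "int \<Rightarrow> point \<Rightarrow> real"

definition D :: "coord \<Rightarrow> cfam \<Rightarrow> point \<Rightarrow> real fls" where
  "D a c p = lser (\<lambda>k. pd a (c k) p)"

definition coeffs :: "(point \<Rightarrow> real fls) \<Rightarrow> cfam" where
  "coeffs H = (\<lambda>k q. lcoeff (H q) k)"

definition PB :: "cfam \<Rightarrow> cfam \<Rightarrow> point \<Rightarrow> real fls" where
  "PB F G p = D X F p * D Y G p - D Y F p * D X G p"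

text \<open>phi1 = -y + \<Sum>_{j\<ge>2} z_j \<lambda>^(j-1) + \<Sum>_{k\<ge>1} g_k \<lambda>^(-k).\<close>
definition phi1 :: "(nat \<Rightarrow> point \<Rightarrow> real) \<Rightarrow> cfam" where
  "phi1 g k = (if k < 0 then g (nat (- k))
               else if k = 0 then (\<lambda>p. - p Y)
               else (\<lambda>p. p (Z (nat k + 1))))"

text \<open>phi2 = x + t_1 \<lambda> + \<Sum>_{n\<ge>2} t_n \<lambda>^n + \<Sum>_{m\<ge>1} f_m \<lambda>^(-m).\<close>
definition phi2 :: "(nat \<Rightarrow> point \<Rightarrow> real) \<Rightarrow> cfam" where
  "phi2 f k = (if k < 0 then f (nat (- k))
               else if k = 0 then (\<lambda>p. p X)
               else (\<lambda>p. p (T (nat k))))"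

fun zcount :: "coord \<Rightarrow> nat" where
  "zcount (Z _) = 1"
| "zcount _ = 0"

definition DF_hierarchy :: "(nat \<Rightarrow> point \<Rightarrow> real) \<Rightarrow> (nat \<Rightarrow> point \<Rightarrow> real) \<Rightarrow> bool" where
  "DF_hierarchy g f \<longleftrightarrow>
     (\<forall>a b p. valid_coord a \<longrightarrow> valid_coord b \<longrightarrow>
        neg_part_zero (lamb ^ (zcount a + zcount b) *
          (D a (phi1 g) p * D b (phi2 f) p - D b (phi1 g) p * D a (phi2 f) p)))"

end

theory Submission
  imports Defs
begin

notation fls_nth (infixl \<open>$$\<close> 75)

lemma clairaut_2d:
  fixes G G1 G2 G12 G21 :: "real \<Rightarrow> real \<Rightarrow> real"
  assumes d1: "\<And>s t. ((\<lambda>s. G s t) has_real_derivative G1 s t) (at s)"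
    and d12: "\<And>s t. ((\<lambda>t. G1 s t) has_real_derivative G12 s t) (at t)"
    and d2: "\<And>s t. ((\<lambda>t. G s t) has_real_derivative G2 s t) (at t)"
    and d21: "\<And>s t. ((\<lambda>s. G2 s t) has_real_derivative G21 s t) (at s)"
    and c12: "continuous_on UNIV (\<lambda>v. G12 (fst v) (snd v))"
    and c21: "continuous_on UNIV (\<lambda>v. G21 (fst v) (snd v))"
  shows "G12 s0 t0 = G21 s0 t0"
proof -
  have key: "\<exists>\<xi> \<eta> \<sigma> \<tau>. \<bar>\<xi> - s0\<bar> < h \<and> \<bar>\<eta> - t0\<bar> < h \<and> \<bar>\<sigma> - s0\<bar> < h \<and> \<bar>\<tau> - t0\<bar> < h
      \<and> G12 \<xi> \<eta> = G21 \<sigma> \<tau>" if h: "h > 0" for h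
  proof -
    have "s0 < s0 + h" "t0 < t0 + h" using h by auto
    obtain \<xi> where \<xi>: "s0 < \<xi>" "\<xi> < s0 + h"
      "(G (s0+h) (t0+h) - G (s0+h) t0) - (G s0 (t0+h) - G s0 t0) = (s0 + h - s0) * (G1 \<xi> (t0+h) - G1 \<xi> t0)"
      using MVT2[OF \<open>s0 < s0 + h\<close>, of "\<lambda>s. G s (t0+h) - G s t0" "\<lambda>s. G1 s (t0+h) - G1 s t0"]
      using DERIV_diff[OF d1 d1] by auto
    obtain \<eta> where \<eta>: "t0 < \<eta>" "\<eta> < t0 + h"
      "G1 \<xi> (t0+h) - G1 \<xi> t0 = (t0 + h - t0) * G12 \<xi> \<eta>"
      using MVT2[OF \<open>t0 < t0 + h\<close>, of "\<lambda>t. G1 \<xi> t" "\<lambda>t. G12 \<xi> t"] d12 by auto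
    obtain \<tau> where \<tau>: "t0 < \<tau>" "\<tau> < t0 + h"
      "(G (s0+h) (t0+h) - G s0 (t0+h)) - (G (s0+h) t0 - G s0 t0) = (t0 + h - t0) * (G2 (s0+h) \<tau> - G2 s0 \<tau>)"
      using MVT2[OF \<open>t0 < t0 + h\<close>, of "\<lambda>t. G (s0+h) t - G s0 t" "\<lambda>t. G2 (s0+h) t - G2 s0 t"]
      using DERIV_diff[OF d2 d2] by auto
    obtain \<sigma> where \<sigma>: "s0 < \<sigma>" "\<sigma> < s0 + h"
      "G2 (s0+h) \<tau> - G2 s0 \<tau> = (s0 + h - s0) * G21 \<sigma> \<tau>"
      using MVT2[OF \<open>s0 < s0 + h\<close>, of "\<lambda>s. G2 s \<tau>" "\<lambda>s. G21 s \<tau>"] d21 by auto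
    have "h * (h * G12 \<xi> \<eta>) = h * (h * G21 \<sigma> \<tau>)"
      using \<xi>(3) \<eta>(3) \<tau>(3) \<sigma>(3) by (simp add: algebra_simps)
    then have "G12 \<xi> \<eta> = G21 \<sigma> \<tau>" using h by simp
    then show ?thesis using \<xi> \<eta> \<sigma> \<tau> by (intro exI[of _ \<xi>] exI[of _ \<eta>] exI[of _ \<sigma>] exI[of _ \<tau>]) auto
  qed
  show ?thesis
  proof (rule ccontr)
    assume ne: "G12 s0 t0 \<noteq> G21 s0 t0"
    define e where "e = \<bar>G12 s0 t0 - G21 s0 t0\<bar> / 2"
    have e: "e > 0" using ne by (simp add: e_def)
    obtain da where da: "da > 0" "\<And>v. dist v (s0, t0) < da \<Longrightarrow> dist (G12 (fst v) (snd v)) (G12 s0 t0) < e"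
      using c12 e unfolding continuous_on_iff by (metis UNIV_I fst_conv snd_conv)
    obtain db where db: "db > 0" "\<And>v. dist v (s0, t0) < db \<Longrightarrow> dist (G21 (fst v) (snd v)) (G21 s0 t0) < e"
      using c21 e unfolding continuous_on_iff by (metis UNIV_I fst_conv snd_conv)
    define h where "h = min da db / 2"
    have h: "h > 0" using da db by (simp add: h_def)
    obtain \<xi> \<eta> \<sigma> \<tau> where P: "\<bar>\<xi> - s0\<bar> < h" "\<bar>\<eta> - t0\<bar> < h" "\<bar>\<sigma> - s0\<bar> < h" "\<bar>\<tau> - t0\<bar> < h"
      "G12 \<xi> \<eta> = G21 \<sigma> \<tau>" using key[OF h] by blast
    have dd: "dist (a, b) (s0, t0) < 2 * h" if "\<bar>a - s0\<bar> < h" "\<bar>b - t0\<bar> < h" for a b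
    proof -
      have "dist (a, b) (s0, t0) = norm (a - s0, b - t0)" by (simp add: dist_norm)
      also have "\<dots> \<le> norm (a - s0) + norm (b - t0)" by (rule norm_Pair_le)
      finally show ?thesis using that by simp
    qed
    have "dist (\<xi>, \<eta>) (s0, t0) < da" using dd[OF P(1,2)] unfolding h_def by linarith
    then have 1: "dist (G12 \<xi> \<eta>) (G12 s0 t0) < e" using da(2) by fastforce
    have "dist (\<sigma>, \<tau>) (s0, t0) < db" using dd[OF P(3,4)] unfolding h_def by linarith
    then have 2: "dist (G21 \<sigma> \<tau>) (G21 s0 t0) < e" using db(2) by fastforce
    have abs_aux: "\<And>x a b :: real. \<bar>x - a\<bar> < \<bar>a - b\<bar> / 2 \<Longrightarrow> \<bar>x - b\<bar> < \<bar>a - b\<bar> / 2 \<Longrightarrow> False"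
      by (auto simp: abs_if split: if_split_asm)
    show False using abs_aux[of "G12 \<xi> \<eta>" "G12 s0 t0" "G21 s0 t0"] 1 2 P(5) unfolding e_def dist_real_def by simp
  qed
qed



lemma pd_has_deriv:
  assumes "smooth_fn F"
  shows "((\<lambda>h. ipd as F (q(a := h))) has_real_derivative pd a (ipd as F) q) (at (q a))"
proof -
  have "(\<lambda>h. ipd as F (q(a := h))) differentiable (at (q a))"
    using assms unfolding smooth_fn_def by blast
  then show ?thesis unfolding pd_def by (simp add: DERIV_deriv_iff_real_differentiable)
qed

lemma pd_comm:
  assumes sm: "smooth_fn F"
  shows "pd a (pd b F) p = pd b (pd a F) p"
proof (cases "a = b")
  case True then show ?thesis by simp
next
  case ab: False
  define G where "G s t = F (p(a := s, b := t))" for s t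
  define G1 where "G1 s t = pd a F (p(a := s, b := t))" for s t
  define G2 where "G2 s t = pd b F (p(a := s, b := t))" for s t
  define G12 where "G12 s t = pd b (pd a F) (p(a := s, b := t))" for s t
  define G21 where "G21 s t = pd a (pd b F) (p(a := s, b := t))" for s t
  have upd1: "(p(a := s, b := t))(a := h) = p(a := h, b := t)" for s t h
    using ab by (simp add: fun_upd_twist)
  have upd2: "(p(a := s, b := t))(b := h) = p(a := s, b := h)" for s t h
    by simp
  have va: "(p(a := s, b := t)) a = s" for s t using ab by simp
  have vb: "(p(a := s, b := t)) b = t" for s t by simp
  have d1: "((\<lambda>s. G s t) has_real_derivative G1 s t) (at s)" for s t
    using pd_has_deriv[OF sm, of "[]" "p(a := s, b := t)" a] unfolding G_def G1_def upd1 va by simp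
  have d12: "((\<lambda>t. G1 s t) has_real_derivative G12 s t) (at t)" for s t
    using pd_has_deriv[OF sm, of "[a]" "p(a := s, b := t)" b] unfolding G1_def G12_def upd2 vb by simp
  have d2: "((\<lambda>t. G s t) has_real_derivative G2 s t) (at t)" for s t
    using pd_has_deriv[OF sm, of "[]" "p(a := s, b := t)" b] unfolding G_def G2_def upd2 vb by simp
  have d21: "((\<lambda>s. G2 s t) has_real_derivative G21 s t) (at s)" for s t
    using pd_has_deriv[OF sm, of "[b]" "p(a := s, b := t)" a] unfolding G2_def G21_def upd1 va by simp
  have c12: "continuous_on UNIV (\<lambda>v. G12 (fst v) (snd v))"
  proof -
    have "continuous_on UNIV (\<lambda>v::real\<times>real. ipd [b, a] F (p(a := fst v, b := snd v)))"
      using sm unfolding smooth_fn_def by blast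
    then show ?thesis unfolding G12_def by simp
  qed
  have c21: "continuous_on UNIV (\<lambda>v. G21 (fst v) (snd v))"
  proof -
    have "continuous_on UNIV (\<lambda>v::real\<times>real. ipd [a, b] F (p(a := fst v, b := snd v)))"
      using sm unfolding smooth_fn_def by blast
    then show ?thesis unfolding G21_def by simp
  qed
  have "G12 (p a) (p b) = G21 (p a) (p b)"
    by (rule clairaut_2d[OF d1 d12 d2 d21 c12 c21])
  then show ?thesis unfolding G12_def G21_def by simp
qed

lemma pd_coord: "pd a (\<lambda>q. q b) p = (if a = b then 1 else 0)"
  unfolding pd_def
  by (cases "a = b") (auto intro!: DERIV_imp_deriv derivative_eq_intros)

lemma pd_mcoord: "pd a (\<lambda>q. - q b) p = (if a = b then -1 else 0)"
  unfolding pd_def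
  by (cases "a = b") (auto intro!: DERIV_imp_deriv derivative_eq_intros)

lemma pd_zero: "pd a (\<lambda>q. 0) p = 0"
  unfolding pd_def by (auto intro!: DERIV_imp_deriv derivative_eq_intros)


lemma pd_mdiff:
  assumes "smooth_fn F" "smooth_fn G"
  shows "pd a (\<lambda>q. - F q - G q) p = - pd a F p - pd a G p"
proof -
  have "((\<lambda>h. - F (p(a := h)) - G (p(a := h))) has_real_derivative (- pd a F p - pd a G p)) (at (p a))"
    using pd_has_deriv[OF assms(1), of "[]" p a] pd_has_deriv[OF assms(2), of "[]" p a]
    by (auto intro!: derivative_eq_intros)
  then show ?thesis unfolding pd_def by (rule DERIV_imp_deriv)
qed

lemma smooth_pd:
  assumes "smooth_fn F" shows "smooth_fn (pd a F)"
proof -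
  have "ipd as (pd a F) = ipd (as @ [a]) F" for as
    by (induction as) auto
  then show ?thesis using assms unfolding smooth_fn_def by metis
qed

definition Nf :: "(nat \<Rightarrow> real) \<Rightarrow> real fls" where
  "Nf c = Abs_fls (\<lambda>n. if 0 < n then c (nat n) else 0)"

lemma Nf_nth [simp]: "Nf c $$ n = (if 0 < n then c (nat n) else 0)"
  unfolding Nf_def by (subst nth_Abs_fls) auto

lemma D_nth:
  assumes "\<And>i. i < L \<Longrightarrow> pd a (c (- i)) p = 0"
  shows "D a c p $$ n = pd a (c (- n)) p"
  unfolding D_def lser_def
proof (rule nth_Abs_fls_ex_nat_lower_bound)
  show "\<exists>m. \<forall>k>m. pd a (c (- (- int k))) p = 0"
  proof (intro exI[of _ "nat (- L)"] allI impI)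
    fix k assume "nat (- L) < k"
    then have "- int k < L" by linarith
    then show "pd a (c (- (- int k))) p = 0" using assms by fastforce
  qed
qed

lemma NN_nth: "i \<le> 1 \<Longrightarrow> (Nf c * Nf d) $$ i = 0"
proof -
  assume i: "i \<le> 1"
  show ?thesis
  proof (cases "Nf c = 0 \<or> Nf d = 0")
    case True then show ?thesis by auto
  next
    case False
    have "1 \<le> fls_subdegree (Nf c)" using False by (intro fls_subdegree_geI) auto
    moreover have "1 \<le> fls_subdegree (Nf d)" using False by (intro fls_subdegree_geI) auto
    ultimately show ?thesis using i by (intro fls_times_nth_eq0) auto
  qed
qed

lemma lamb_pow_times_nth [simp]: "(lamb ^ m * F) $$ i = F $$ (i + int m)"
  unfolding lamb_def by (simp add: fls_X_inv_power_times_conv_shift)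

lemma times_lamb_pow_nth [simp]: "(F * lamb ^ m) $$ i = F $$ (i + int m)"
  unfolding lamb_def by (simp add: fls_X_inv_power_times_conv_shift)

lemma lamb_times_nth [simp]: "(lamb * F) $$ i = F $$ (i + 1)"
  using lamb_pow_times_nth[of 1 F i] by simp

lemma lamb_pow_nth [simp]: "(lamb ^ m) $$ i = (if i = - int m then 1 else 0)"
  unfolding lamb_def by simp

lemma lamb_const_nth: "(lamb ^ m * fls_const c) $$ i = (if i = - int m then c else 0)"
  by simp

lemma sum_delta_int:
  "(\<Sum>k'=1..n. if i = - int (n - k') then c k' else (0::real)) =
     (if - int n < i \<and> i \<le> 0 then c (nat (int n + i)) else 0)"
proof -
  have "(\<Sum>k'=1..n. if i = - int (n - k') then c k' else (0::real)) =
        (\<Sum>k'=1..n. if k' = nat (int n + i) then c k' else 0)"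
    by (rule sum.cong) auto
  also have "\<dots> = (if nat (int n + i) \<in> {1..n} then c (nat (int n + i)) else 0)"
    by (simp add: sum.delta')
  finally show ?thesis by auto
qed




definition cbound :: "coord \<Rightarrow> int" where
  "cbound a = (case a of Z j \<Rightarrow> - int j | T j \<Rightarrow> - int j | _ \<Rightarrow> 0)"

lemma D_phi1_nth:
  "D a (phi1 g) p $$ n = (if 0 < n then pd a (g (nat n)) p else if n = 0 then (if a = Y then -1 else 0)
      else (if a = Z (nat (- n) + 1) then 1 else 0))"
proof -
  have "D a (phi1 g) p $$ n = pd a (phi1 g (- n)) p"
  proof (rule D_nth[where L = "cbound a"])
    fix i assume i: "i < cbound a"
    then have "i < 0" by (auto simp: cbound_def split: coord.splits)
    then have "phi1 g (- i) = (\<lambda>p. p (Z (nat (- i) + 1)))" by (simp add: phi1_def)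
    moreover have "a \<noteq> Z (nat (- i) + 1)" using i by (auto simp: cbound_def split: coord.splits)
    ultimately show "pd a (phi1 g (- i)) p = 0" by (simp add: pd_coord)
  qed
  then show ?thesis by (auto simp: phi1_def pd_coord pd_mcoord)
qed

lemma D_phi2_nth:
  "D a (phi2 f) p $$ n = (if 0 < n then pd a (f (nat n)) p else if n = 0 then (if a = X then 1 else 0)
      else (if a = T (nat (- n)) then 1 else 0))"
proof -
  have "D a (phi2 f) p $$ n = pd a (phi2 f (- n)) p"
  proof (rule D_nth[where L = "cbound a"])
    fix i assume i: "i < cbound a"
    then have "i < 0" by (auto simp: cbound_def split: coord.splits)
    then have "phi2 f (- i) = (\<lambda>p. p (T (nat (- i))))" by (simp add: phi2_def)
    moreover have "a \<noteq> T (nat (- i))" using i by (auto simp: cbound_def split: coord.splits)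
    ultimately show "pd a (phi2 f (- i)) p = 0" by (simp add: pd_coord)
  qed
  then show ?thesis by (auto simp: phi2_def pd_coord pd_mcoord)
qed

lemma D1X: "D X (phi1 g) p = Nf (\<lambda>k. pd X (g k) p)"
  by (rule fls_eqI) (simp add: D_phi1_nth)
lemma D1Y: "D Y (phi1 g) p = -1 + Nf (\<lambda>k. pd Y (g k) p)"
  by (rule fls_eqI) (simp add: D_phi1_nth)
lemma D1T: "D (T n) (phi1 g) p = Nf (\<lambda>k. pd (T n) (g k) p)"
  by (rule fls_eqI) (simp add: D_phi1_nth)
lemma D1Z1: "D (Z 1) (phi1 g) p = Nf (\<lambda>k. pd (Z 1) (g k) p)"
  by (rule fls_eqI) (simp add: D_phi1_nth)
lemma D1Z: "j \<ge> 2 \<Longrightarrow> D (Z j) (phi1 g) p = lamb ^ (j - 1) + Nf (\<lambda>k. pd (Z j) (g k) p)"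
  by (rule fls_eqI) (auto simp: D_phi1_nth)
lemma D2X: "D X (phi2 f) p = 1 + Nf (\<lambda>k. pd X (f k) p)"
  by (rule fls_eqI) (simp add: D_phi2_nth)
lemma D2Y: "D Y (phi2 f) p = Nf (\<lambda>k. pd Y (f k) p)"
  by (rule fls_eqI) (simp add: D_phi2_nth)
lemma D2T: "n \<ge> 1 \<Longrightarrow> D (T n) (phi2 f) p = lamb ^ n + Nf (\<lambda>k. pd (T n) (f k) p)"
  by (rule fls_eqI) (auto simp: D_phi2_nth)
lemma D2Z: "D (Z j) (phi2 f) p = Nf (\<lambda>k. pd (Z j) (f k) p)"
  by (rule fls_eqI) (simp add: D_phi2_nth)




lemma hier_nth:
  assumes "DF_hierarchy g f" "valid_coord a" "valid_coord b" "0 < i"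
  shows "(lamb ^ (zcount a + zcount b) *
          (D a (phi1 g) p * D b (phi2 f) p - D b (phi1 g) p * D a (phi2 f) p)) $$ i = 0"
proof -
  have "neg_part_zero (lamb ^ (zcount a + zcount b) *
          (D a (phi1 g) p * D b (phi2 f) p - D b (phi1 g) p * D a (phi2 f) p))"
    using assms unfolding DF_hierarchy_def by blast
  then show ?thesis unfolding neg_part_zero_def lcoeff_def using assms(4)
    by (metis add.inverse_inverse neg_less_0_iff_less)
qed

lemma det1:
  assumes "DF_hierarchy g f"
  shows "D X (phi1 g) p * D Y (phi2 f) p - D Y (phi1 g) p * D X (phi2 f) p = 1"
proof (rule fls_eqI)
  fix i
  show "(D X (phi1 g) p * D Y (phi2 f) p - D Y (phi1 g) p * D X (phi2 f) p) $$ i = 1 $$ i"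
  proof (cases "0 < i")
    case True
    then show ?thesis using hier_nth[OF assms, of X Y i p] by simp
  next
    case False
    have e: "D X (phi1 g) p * D Y (phi2 f) p - D Y (phi1 g) p * D X (phi2 f) p =
      Nf (\<lambda>k. pd X (g k) p) * Nf (\<lambda>k. pd Y (f k) p) + 1 + Nf (\<lambda>k. pd X (f k) p)
       - Nf (\<lambda>k. pd Y (g k) p) - Nf (\<lambda>k. pd Y (g k) p) * Nf (\<lambda>k. pd X (f k) p)"
      by (simp add: D1X D1Y D2X D2Y algebra_simps)
    show ?thesis unfolding e using False by (simp add: NN_nth)
  qed
qed

definition HT :: "(nat \<Rightarrow> point \<Rightarrow> real) \<Rightarrow> nat \<Rightarrow> point \<Rightarrow> real fls" where
  "HT g n = (\<lambda>q. - (lamb ^ n * fls_const (q Y)) + (\<Sum>k = 1..n. lamb ^ (n - k) * fls_const (g k q)))"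

lemma HT_nth: "HT g n q $$ i = (if i = - int n then - q Y else 0) +
   (if - int n < i \<and> i \<le> 0 then g (nat (int n + i)) q else 0)"
proof -
  have "(\<Sum>k = 1..n. lamb ^ (n - k) * fls_const (g k q)) $$ i = (\<Sum>k = 1..n. if i = - int (n - k) then g k q else 0)"
    unfolding fls_nth_sum by (intro sum.cong refl) (rule lamb_const_nth)
  then show ?thesis unfolding HT_def sum_delta_int by simp
qed

lemma D_coeffs_nth:
  assumes "\<And>i q. i < L \<Longrightarrow> H q $$ i = 0"
  shows "D a (coeffs H) p $$ i = pd a (\<lambda>q. H q $$ i) p"
proof -
  have "D a (coeffs H) p $$ i = pd a (coeffs H (- i)) p"
  proof (rule D_nth[where L = L])
    fix i :: int assume "i < L"
    then have "coeffs H (- i) = (\<lambda>q. 0)" using assms unfolding coeffs_def lcoeff_def by auto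
    then show "pd a (coeffs H (- i)) p = 0" by (simp add: pd_zero)
  qed
  then show ?thesis unfolding coeffs_def lcoeff_def by simp
qed

lemma DHT_nth: "D a (coeffs (HT g n)) p $$ i =
   (if i = - int n then (if a = Y then -1 else 0) else if - int n < i \<and> i \<le> 0 then pd a (g (nat (int n + i))) p else 0)"
proof -
  have "D a (coeffs (HT g n)) p $$ i = pd a (\<lambda>q. HT g n q $$ i) p"
    by (rule D_coeffs_nth[where L = "- int n"]) (simp add: HT_nth)
  also have "\<dots> = (if i = - int n then (if a = Y then -1 else 0) else if - int n < i \<and> i \<le> 0 then pd a (g (nat (int n + i))) p else 0)"
  proof -
    consider "i = - int n" | "- int n < i \<and> i \<le> 0" | "\<not> (i = - int n) \<and> \<not> (- int n < i \<and> i \<le> 0)" by blast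
    then show ?thesis
    proof cases
      case 1
      then have "(\<lambda>q. HT g n q $$ i) = (\<lambda>q. - q Y)" by (auto simp: HT_nth)
      then show ?thesis using 1 by (simp add: pd_mcoord)
    next
      case 2
      then have "(\<lambda>q. HT g n q $$ i) = g (nat (int n + i))" by (auto simp: HT_nth)
      then show ?thesis using 2 by simp
    next
      case 3
      then have "(\<lambda>q. HT g n q $$ i) = (\<lambda>q. 0)" by (auto simp: HT_nth)
      then show ?thesis using 3 by (auto simp: pd_zero)
    qed
  qed
  finally show ?thesis .
qed

lemma DXHT:
  assumes hier: "DF_hierarchy g f" and n: "n \<ge> 1"
  shows "D X (coeffs (HT g n)) p = D X (phi1 g) p * D (T n) (phi2 f) p - D (T n) (phi1 g) p * D X (phi2 f) p"
proof (rule fls_eqI)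
  fix i
  show "D X (coeffs (HT g n)) p $$ i = (D X (phi1 g) p * D (T n) (phi2 f) p - D (T n) (phi1 g) p * D X (phi2 f) p) $$ i"
  proof (cases "0 < i")
    case True
    then show ?thesis using hier_nth[OF hier, of "T n" X i p] n by (simp add: DHT_nth)
  next
    case False
    have e: "D X (phi1 g) p * D (T n) (phi2 f) p - D (T n) (phi1 g) p * D X (phi2 f) p =
      Nf (\<lambda>k. pd X (g k) p) * lamb ^ n + Nf (\<lambda>k. pd X (g k) p) * Nf (\<lambda>k. pd (T n) (f k) p)
       - Nf (\<lambda>k. pd (T n) (g k) p) - Nf (\<lambda>k. pd (T n) (g k) p) * Nf (\<lambda>k. pd X (f k) p)"
      using n by (simp add: D1X D1T D2X D2T algebra_simps)
    show ?thesis unfolding e using False by (auto simp: NN_nth DHT_nth add.commute)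
  qed
qed

lemma DYHT:
  assumes hier: "DF_hierarchy g f" and n: "n \<ge> 1"
  shows "D Y (coeffs (HT g n)) p = D Y (phi1 g) p * D (T n) (phi2 f) p - D (T n) (phi1 g) p * D Y (phi2 f) p"
proof (rule fls_eqI)
  fix i
  show "D Y (coeffs (HT g n)) p $$ i = (D Y (phi1 g) p * D (T n) (phi2 f) p - D (T n) (phi1 g) p * D Y (phi2 f) p) $$ i"
  proof (cases "0 < i")
    case True
    then show ?thesis using hier_nth[OF hier, of "T n" Y i p] n by (simp add: DHT_nth)
  next
    case False
    have e: "D Y (phi1 g) p * D (T n) (phi2 f) p - D (T n) (phi1 g) p * D Y (phi2 f) p =
      - (lamb ^ n) - Nf (\<lambda>k. pd (T n) (f k) p) + Nf (\<lambda>k. pd Y (g k) p) * lamb ^ n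
      + Nf (\<lambda>k. pd Y (g k) p) * Nf (\<lambda>k. pd (T n) (f k) p)
       - Nf (\<lambda>k. pd (T n) (g k) p) * Nf (\<lambda>k. pd Y (f k) p)"
      using n by (simp add: D1Y D1T D2Y D2T algebra_simps)
    show ?thesis unfolding e using False by (auto simp: NN_nth DHT_nth add.commute)
  qed
qed




lemma pd_minus:
  assumes "smooth_fn F"
  shows "pd a (\<lambda>q. - F q) p = - pd a F p"
proof -
  have "((\<lambda>h. - F (p(a := h))) has_real_derivative (- pd a F p)) (at (p a))"
    using pd_has_deriv[OF assms(1), of "[]" p a] by (auto intro!: derivative_eq_intros)
  then show ?thesis unfolding pd_def by (rule DERIV_imp_deriv)
qed

definition HZ :: "(nat \<Rightarrow> point \<Rightarrow> real) \<Rightarrow> (point \<Rightarrow> real) \<Rightarrow> nat \<Rightarrow> point \<Rightarrow> real fls" where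
  "HZ f u j = (\<lambda>q. - (lamb ^ j * fls_const (q X))
                           - (\<Sum>m = 1..j. lamb ^ (j - m) * fls_const (f m q))
                           - fls_const (pd (Z j) u q))"

lemma HZ_nth: "HZ f u j q $$ i = (if i = - int j then - q X else 0) -
   (if - int j < i \<and> i \<le> 0 then f (nat (int j + i)) q else 0) - (if i = 0 then pd (Z j) u q else 0)"
proof -
  have "(\<Sum>k = 1..j. lamb ^ (j - k) * fls_const (f k q)) $$ i = (\<Sum>k = 1..j. if i = - int (j - k) then f k q else 0)"
    unfolding fls_nth_sum by (intro sum.cong refl) (rule lamb_const_nth)
  then show ?thesis unfolding HZ_def sum_delta_int by simp
qed

lemma DHZ_nth:
  assumes sf: "\<And>m. m \<ge> 1 \<Longrightarrow> smooth_fn (f m)" and su: "smooth_fn u" and j: "j \<ge> 2"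
  shows "D a (coeffs (HZ f u j)) p $$ i =
   (if i = - int j then (if a = X then -1 else 0)
    else if - int j < i \<and> i < 0 then - pd a (f (nat (int j + i))) p
    else if i = 0 then - pd a (f j) p - pd a (pd (Z j) u) p else 0)"
proof -
  have "D a (coeffs (HZ f u j)) p $$ i = pd a (\<lambda>q. HZ f u j q $$ i) p"
    by (rule D_coeffs_nth[where L = "- int j"]) (simp add: HZ_nth)
  also have "\<dots> = (if i = - int j then (if a = X then -1 else 0)
    else if - int j < i \<and> i < 0 then - pd a (f (nat (int j + i))) p
    else if i = 0 then - pd a (f j) p - pd a (pd (Z j) u) p else 0)"
  proof -
    consider "i = - int j" | "- int j < i \<and> i < 0" | "i = 0" |
      "\<not> (i = - int j) \<and> \<not> (- int j < i \<and> i \<le> 0)" by fastforce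
    then show ?thesis
    proof cases
      case 1
      then have "(\<lambda>q. HZ f u j q $$ i) = (\<lambda>q. - q X)" using j by (auto simp: HZ_nth)
      then show ?thesis using 1 by (simp add: pd_mcoord)
    next
      case 2
      then have "(\<lambda>q. HZ f u j q $$ i) = (\<lambda>q. - f (nat (int j + i)) q)" by (auto simp: HZ_nth)
      moreover have "smooth_fn (f (nat (int j + i)))" using 2 by (intro sf) linarith
      ultimately show ?thesis using 2 by (simp add: pd_minus)
    next
      case 3
      then have "(\<lambda>q. HZ f u j q $$ i) = (\<lambda>q. - f j q - pd (Z j) u q)" using j by (auto simp: HZ_nth)
      moreover have "smooth_fn (f j)" using j by (intro sf) linarith
      ultimately show ?thesis using 3 j by (simp add: pd_mdiff smooth_pd su)
    next
      case 4
      then have "(\<lambda>q. HZ f u j q $$ i) = (\<lambda>q. 0)" by (auto simp: HZ_nth)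
      then show ?thesis using 4 by (auto simp: pd_zero)
    qed
  qed
  finally show ?thesis .
qed

definition H1 :: "(point \<Rightarrow> real) \<Rightarrow> point \<Rightarrow> real fls" where
  "H1 u = (\<lambda>q. - fls_const (pd (Z 1) u q))"

lemma DH1_nth:
  assumes su: "smooth_fn u"
  shows "D a (coeffs (H1 u)) p $$ i = (if i = 0 then - pd a (pd (Z 1) u) p else 0)"
proof -
  have "D a (coeffs (H1 u)) p $$ i = pd a (\<lambda>q. H1 u q $$ i) p"
    by (rule D_coeffs_nth[where L = 0]) (simp add: H1_def)
  also have "\<dots> = (if i = 0 then - pd a (pd (Z 1) u) p else 0)"
  proof (cases "i = 0")
    case True
    then have "(\<lambda>q. H1 u q $$ i) = (\<lambda>q. - pd (Z 1) u q)" by (auto simp: H1_def)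
    then show ?thesis using True by (simp add: pd_minus smooth_pd su)
  next
    case False
    then have "(\<lambda>q. H1 u q $$ i) = (\<lambda>q. 0)" by (auto simp: H1_def)
    then show ?thesis using False by (auto simp: pd_zero)
  qed
  finally show ?thesis .
qed

lemma alg_zx: "lam * (a * z - (lj + b) * (1 + c)) = lam * (a * z) - lam * lj - c * (lam * lj) - lam * b - lam * (b * c)"
  for lam :: "real fls" by (simp add: algebra_simps)
lemma alg_zy: "lam * ((-1 + a) * z - (lj + b) * c) = - (lam * z) + lam * (a * z) - c * (lam * lj) - lam * (b * c)"
  for lam :: "real fls" by (simp add: algebra_simps)
lemma alg_1x: "lam * (a * z - b * (1 + c)) = lam * (a * z) - lam * b - lam * (b * c)"
  for lam :: "real fls" by (simp add: algebra_simps)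
lemma alg_1y: "lam * ((-1 + a) * z - b * c) = - (lam * z) + lam * (a * z) - lam * (b * c)"
  for lam :: "real fls" by (simp add: algebra_simps)

lemma lamb_lj: "j \<ge> 1 \<Longrightarrow> lamb * lamb ^ (j - 1) = lamb ^ j"
  by (cases j) auto

lemma DXHZ:
  assumes hier: "DF_hierarchy g f" and sf: "\<And>m. m \<ge> 1 \<Longrightarrow> smooth_fn (f m)" and su: "smooth_fn u"
    and j: "j \<ge> 2" and g1: "g 1 = pd X u"
  shows "D X (coeffs (HZ f u j)) p = lamb * (D X (phi1 g) p * D (Z j) (phi2 f) p - D (Z j) (phi1 g) p * D X (phi2 f) p)"
proof (rule fls_eqI)
  fix i
  show "D X (coeffs (HZ f u j)) p $$ i = (lamb * (D X (phi1 g) p * D (Z j) (phi2 f) p - D (Z j) (phi1 g) p * D X (phi2 f) p)) $$ i"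
  proof (cases "0 < i")
    case True
    then show ?thesis using hier_nth[OF hier, of "Z j" X i p] j by (simp add: DHZ_nth[OF sf su j])
  next
    case False
    have lj: "lamb * lamb ^ (j - 1) = lamb ^ j" using j by (intro lamb_lj) simp
    have e: "lamb * (D X (phi1 g) p * D (Z j) (phi2 f) p - D (Z j) (phi1 g) p * D X (phi2 f) p) =
      lamb * (Nf (\<lambda>k. pd X (g k) p) * Nf (\<lambda>k. pd (Z j) (f k) p)) - lamb ^ j
      - Nf (\<lambda>k. pd X (f k) p) * lamb ^ j - lamb * Nf (\<lambda>k. pd (Z j) (g k) p)
      - lamb * (Nf (\<lambda>k. pd (Z j) (g k) p) * Nf (\<lambda>k. pd X (f k) p))"
      using j unfolding D1X D1Z[OF j] D2X D2Z alg_zx lj by simp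
    have cl: "pd X (pd (Z j) u) p = pd (Z j) (pd X u) p" by (rule pd_comm[OF su])
    have g1': "g (Suc 0) = pd X u" using g1 by simp
    show ?thesis unfolding e using False j
      by (auto simp: NN_nth DHZ_nth[OF sf su j] add.commute cl g1')
  qed
qed

lemma DYHZ:
  assumes hier: "DF_hierarchy g f" and sf: "\<And>m. m \<ge> 1 \<Longrightarrow> smooth_fn (f m)" and su: "smooth_fn u"
    and j: "j \<ge> 2" and f1: "f 1 = pd Y u"
  shows "D Y (coeffs (HZ f u j)) p = lamb * (D Y (phi1 g) p * D (Z j) (phi2 f) p - D (Z j) (phi1 g) p * D Y (phi2 f) p)"
proof (rule fls_eqI)
  fix i
  show "D Y (coeffs (HZ f u j)) p $$ i = (lamb * (D Y (phi1 g) p * D (Z j) (phi2 f) p - D (Z j) (phi1 g) p * D Y (phi2 f) p)) $$ i"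
  proof (cases "0 < i")
    case True
    then show ?thesis using hier_nth[OF hier, of "Z j" Y i p] j by (simp add: DHZ_nth[OF sf su j])
  next
    case False
    have lj: "lamb * lamb ^ (j - 1) = lamb ^ j" using j by (intro lamb_lj) simp
    have e: "lamb * (D Y (phi1 g) p * D (Z j) (phi2 f) p - D (Z j) (phi1 g) p * D Y (phi2 f) p) =
      - (lamb * Nf (\<lambda>k. pd (Z j) (f k) p)) + lamb * (Nf (\<lambda>k. pd Y (g k) p) * Nf (\<lambda>k. pd (Z j) (f k) p))
      - Nf (\<lambda>k. pd Y (f k) p) * lamb ^ j
      - lamb * (Nf (\<lambda>k. pd (Z j) (g k) p) * Nf (\<lambda>k. pd Y (f k) p))"
      using j unfolding D1Y D1Z[OF j] D2Y D2Z alg_zy lj by simp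
    have cl: "pd Y (pd (Z j) u) p = pd (Z j) (pd Y u) p" by (rule pd_comm[OF su])
    have f1': "f (Suc 0) = pd Y u" using f1 by simp
    show ?thesis unfolding e using False j
      by (auto simp: NN_nth DHZ_nth[OF sf su j] add.commute cl f1')
  qed
qed

lemma DXH1:
  assumes hier: "DF_hierarchy g f" and su: "smooth_fn u" and g1: "g 1 = pd X u"
  shows "D X (coeffs (H1 u)) p = lamb * (D X (phi1 g) p * D (Z 1) (phi2 f) p - D (Z 1) (phi1 g) p * D X (phi2 f) p)"
proof (rule fls_eqI)
  fix i
  show "D X (coeffs (H1 u)) p $$ i = (lamb * (D X (phi1 g) p * D (Z 1) (phi2 f) p - D (Z 1) (phi1 g) p * D X (phi2 f) p)) $$ i"
  proof (cases "0 < i")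
    case True
    then show ?thesis using hier_nth[OF hier, of "Z 1" X i p] by (simp add: DH1_nth[OF su])
  next
    case False
    have e: "lamb * (D X (phi1 g) p * D (Z 1) (phi2 f) p - D (Z 1) (phi1 g) p * D X (phi2 f) p) =
      lamb * (Nf (\<lambda>k. pd X (g k) p) * Nf (\<lambda>k. pd (Z 1) (f k) p))
      - lamb * Nf (\<lambda>k. pd (Z 1) (g k) p)
      - lamb * (Nf (\<lambda>k. pd (Z 1) (g k) p) * Nf (\<lambda>k. pd X (f k) p))"
      unfolding D1X D1Z1 D2X D2Z alg_1x by (rule refl)
    have cl: "pd X (pd (Z (Suc 0)) u) p = pd (Z (Suc 0)) (pd X u) p" by (rule pd_comm[OF su])
    have g1': "g (Suc 0) = pd X u" using g1 by simp
    show ?thesis unfolding e using False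
      by (auto simp: NN_nth DH1_nth[OF su] add.commute cl g1')
  qed
qed

lemma DYH1:
  assumes hier: "DF_hierarchy g f" and su: "smooth_fn u" and f1: "f 1 = pd Y u"
  shows "D Y (coeffs (H1 u)) p = lamb * (D Y (phi1 g) p * D (Z 1) (phi2 f) p - D (Z 1) (phi1 g) p * D Y (phi2 f) p)"
proof (rule fls_eqI)
  fix i
  show "D Y (coeffs (H1 u)) p $$ i = (lamb * (D Y (phi1 g) p * D (Z 1) (phi2 f) p - D (Z 1) (phi1 g) p * D Y (phi2 f) p)) $$ i"
  proof (cases "0 < i")
    case True
    then show ?thesis using hier_nth[OF hier, of "Z 1" Y i p] by (simp add: DH1_nth[OF su])
  next
    case False
    have e: "lamb * (D Y (phi1 g) p * D (Z 1) (phi2 f) p - D (Z 1) (phi1 g) p * D Y (phi2 f) p) =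
      - (lamb * Nf (\<lambda>k. pd (Z 1) (f k) p)) + lamb * (Nf (\<lambda>k. pd Y (g k) p) * Nf (\<lambda>k. pd (Z 1) (f k) p))
      - lamb * (Nf (\<lambda>k. pd (Z 1) (g k) p) * Nf (\<lambda>k. pd Y (f k) p))"
      unfolding D1Y D1Z1 D2Y D2Z alg_1y by (rule refl)
    have cl: "pd Y (pd (Z (Suc 0)) u) p = pd (Z (Suc 0)) (pd Y u) p" by (rule pd_comm[OF su])
    have f1': "f (Suc 0) = pd Y u" using f1 by simp
    show ?thesis unfolding e using False
      by (auto simp: NN_nth DH1_nth[OF su] add.commute cl f1')
  qed
qed

lemma cramer:
  fixes lam x1 x2 y1 y2 a1 a2 :: "real fls"
  assumes "x1 * y2 - y1 * x2 = 1"
  shows "(lam * (x1 * a2 - a1 * x2)) * y1 - (lam * (y1 * a2 - a1 * y2)) * x1 = lam * a1"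
    and "(lam * (x1 * a2 - a1 * x2)) * y2 - (lam * (y1 * a2 - a1 * y2)) * x2 = lam * a2"
proof -
  have "(lam * (x1 * a2 - a1 * x2)) * y1 - (lam * (y1 * a2 - a1 * y2)) * x1 = lam * a1 * (x1 * y2 - y1 * x2)"
    by (simp add: algebra_simps)
  then show "(lam * (x1 * a2 - a1 * x2)) * y1 - (lam * (y1 * a2 - a1 * y2)) * x1 = lam * a1"
    using assms by simp
  have "(lam * (x1 * a2 - a1 * x2)) * y2 - (lam * (y1 * a2 - a1 * y2)) * x2 = lam * a2 * (x1 * y2 - y1 * x2)"
    by (simp add: algebra_simps)
  then show "(lam * (x1 * a2 - a1 * x2)) * y2 - (lam * (y1 * a2 - a1 * y2)) * x2 = lam * a2"
    using assms by simp
qed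


lemma cramer0:
  fixes x1 x2 y1 y2 a1 a2 :: "real fls"
  assumes "x1 * y2 - y1 * x2 = 1"
  shows "(x1 * a2 - a1 * x2) * y1 - (y1 * a2 - a1 * y2) * x1 = a1"
    and "(x1 * a2 - a1 * x2) * y2 - (y1 * a2 - a1 * y2) * x2 = a2"
  using cramer[OF assms, where lam = 1] by simp_all

theorem mainTheorem3:
  fixes g f :: "nat \<Rightarrow> point \<Rightarrow> real" and u :: "point \<Rightarrow> real"
  assumes smooth_g: "\<And>k. k \<ge> 1 \<Longrightarrow> smooth_fn (g k)"
    and smooth_f: "\<And>m. m \<ge> 1 \<Longrightarrow> smooth_fn (f m)"
    and smooth_u: "smooth_fn u"
    and hier: "DF_hierarchy g f"
    and g1: "g 1 = pd X u"
    and f1: "f 1 = pd Y u"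
  shows
    "(\<forall>n \<ge> 1. \<forall>p.
        D (T n) (phi1 g) p =
          PB (coeffs (\<lambda>q. - (lamb ^ n * fls_const (q Y))
                           + (\<Sum>k = 1..n. lamb ^ (n - k) * fls_const (g k q)))) (phi1 g) p
      \<and> D (T n) (phi2 f) p =
          PB (coeffs (\<lambda>q. - (lamb ^ n * fls_const (q Y))
                           + (\<Sum>k = 1..n. lamb ^ (n - k) * fls_const (g k q)))) (phi2 f) p)
   \<and> (\<forall>j \<ge> 2. \<forall>p.
        lamb * D (Z j) (phi1 g) p =
          PB (coeffs (\<lambda>q. - (lamb ^ j * fls_const (q X))
                           - (\<Sum>m = 1..j. lamb ^ (j - m) * fls_const (f m q))
                           - fls_const (pd (Z j) u q))) (phi1 g) p
      \<and> lamb * D (Z j) (phi2 f) p =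
          PB (coeffs (\<lambda>q. - (lamb ^ j * fls_const (q X))
                           - (\<Sum>m = 1..j. lamb ^ (j - m) * fls_const (f m q))
                           - fls_const (pd (Z j) u q))) (phi2 f) p)
   \<and> (\<forall>p.
        lamb * D (Z 1) (phi1 g) p = PB (coeffs (\<lambda>q. - fls_const (pd (Z 1) u q))) (phi1 g) p
      \<and> lamb * D (Z 1) (phi2 f) p = PB (coeffs (\<lambda>q. - fls_const (pd (Z 1) u q))) (phi2 f) p)"
proof (intro conjI allI impI)
  fix n :: nat and p assume n: "1 \<le> n"
  note dt = det1[OF hier, of p]
  show "D (T n) (phi1 g) p =
          PB (coeffs (\<lambda>q. - (lamb ^ n * fls_const (q Y))
                           + (\<Sum>k = 1..n. lamb ^ (n - k) * fls_const (g k q)))) (phi1 g) p"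
    unfolding HT_def[symmetric] PB_def DXHT[OF hier n] DYHT[OF hier n]
    by (rule cramer0(1)[OF dt, symmetric])
  show "D (T n) (phi2 f) p =
          PB (coeffs (\<lambda>q. - (lamb ^ n * fls_const (q Y))
                           + (\<Sum>k = 1..n. lamb ^ (n - k) * fls_const (g k q)))) (phi2 f) p"
    unfolding HT_def[symmetric] PB_def DXHT[OF hier n] DYHT[OF hier n]
    by (rule cramer0(2)[OF dt, symmetric])
next
  fix j :: nat and p assume j: "2 \<le> j"
  note dt = det1[OF hier, of p]
  have hx: "D X (coeffs (\<lambda>q. - (lamb ^ j * fls_const (q X))
                           - (\<Sum>m = 1..j. lamb ^ (j - m) * fls_const (f m q))
                           - fls_const (pd (Z j) u q))) p = lamb * (D X (phi1 g) p * D (Z j) (phi2 f) p - D (Z j) (phi1 g) p * D X (phi2 f) p)"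
    using DXHZ[OF hier smooth_f smooth_u j g1, of p] unfolding HZ_def .
  have hy: "D Y (coeffs (\<lambda>q. - (lamb ^ j * fls_const (q X))
                           - (\<Sum>m = 1..j. lamb ^ (j - m) * fls_const (f m q))
                           - fls_const (pd (Z j) u q))) p = lamb * (D Y (phi1 g) p * D (Z j) (phi2 f) p - D (Z j) (phi1 g) p * D Y (phi2 f) p)"
    using DYHZ[OF hier smooth_f smooth_u j f1, of p] unfolding HZ_def .
  show "lamb * D (Z j) (phi1 g) p = PB (coeffs (\<lambda>q. - (lamb ^ j * fls_const (q X))
                           - (\<Sum>m = 1..j. lamb ^ (j - m) * fls_const (f m q))
                           - fls_const (pd (Z j) u q))) (phi1 g) p"
    unfolding PB_def hx hy by (rule cramer(1)[OF dt, symmetric])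
  show "lamb * D (Z j) (phi2 f) p = PB (coeffs (\<lambda>q. - (lamb ^ j * fls_const (q X))
                           - (\<Sum>m = 1..j. lamb ^ (j - m) * fls_const (f m q))
                           - fls_const (pd (Z j) u q))) (phi2 f) p"
    unfolding PB_def hx hy by (rule cramer(2)[OF dt, symmetric])
next
  fix p
  note dt = det1[OF hier, of p]
  have hx: "D X (coeffs (\<lambda>q. - fls_const (pd (Z 1) u q))) p = lamb * (D X (phi1 g) p * D (Z 1) (phi2 f) p - D (Z 1) (phi1 g) p * D X (phi2 f) p)"
    using DXH1[OF hier smooth_u g1, of p] unfolding H1_def .
  have hy: "D Y (coeffs (\<lambda>q. - fls_const (pd (Z 1) u q))) p = lamb * (D Y (phi1 g) p * D (Z 1) (phi2 f) p - D (Z 1) (phi1 g) p * D Y (phi2 f) p)"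
    using DYH1[OF hier smooth_u f1, of p] unfolding H1_def .
  show "lamb * D (Z 1) (phi1 g) p = PB (coeffs (\<lambda>q. - fls_const (pd (Z 1) u q))) (phi1 g) p"
    unfolding PB_def hx hy by (rule cramer(1)[OF dt, symmetric])
  show "lamb * D (Z 1) (phi2 f) p = PB (coeffs (\<lambda>q. - fls_const (pd (Z 1) u q))) (phi2 f) p"
    unfolding PB_def hx hy by (rule cramer(2)[OF dt, symmetric])
qed

end
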